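(* Suppose $N$ acts locally freely on $\mu^{-1}(0)$. Then condition (S) holds (i.e. at no point $p\in\mu^{-1}(0)$ is there a nonzero $(X_1,X_2,X_3)\in\mathfrak n^3$ with $(IX_1+SX_2+TX_3)_p=0$) if and only if, for every $(a,b)\in K$, the real-linear map $\Lambda_{(a,b)}\colon \mathfrak n_{L,J}\otimes(\mathbb R\times\mathbb C)\to\mathbb C^{L\setminus J}$, $(\theta^{(1)},\theta^{(c)})\mapsto (b_k\theta^{(1)}_k+a_k\theta^{(c)}_k)_{k\in L\setminus J}$, is injective, where $J=J(a,b)$, $L=L(a,b)$.
   Context: Setting: $\mathbb C^{d,d}=\mathbb C^d\times\mathbb C^d$ with coordinates $(z,w)$, $g=\mathrm{Re}\sum_k(dz_k\,d\bar z_k-dw_k\,d\bar w_k)$, $I(z,w)=(iz,-iw)$, $S(z,w)=(w,z)$, $T=IS$; $\mathbb T^d$ acts by $(z_k,w_k)\mapsto(e^{i\theta_k}z_k,e^{i\theta_k}w_k)$, and elements of $\mathfrak n\subset\mathbb R^d$ are identified with induced vector fields. Fix $u_1,\dots,u_d\in\mathbb Z^n$ spanning $\mathbb R^n$; $\beta\colon\mathbb R^d\to\mathbb R^n$, $e_k\mapsto u_k$; $\mathfrak n=\ker\beta$ with inclusion $\iota$; $N\subset\mathbb T^d$ the kernel of the induced map $\mathbb T^d\to\mathbb T^n$. Identify $\mathbb R^d$ with its dual via the standard inner product. Fix real $\lambda^{(j)}_k$, $\lambda^{(c)}_k=\lambda^{(2)}_k+i\lambda^{(3)}_k$; $\mu_I(z,w)=\sum_k(\tfrac12(|z_k|^2+|w_k|^2)+\lambda^{(1)}_k)\iota^*e_k$,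 $(\mu_S+i\mu_T)(z,w)=\sum_k(iz_k\bar w_k+\lambda^{(c)}_k)\iota^*e_k$. For $(a,b)\in\mathbb R^n\times\mathbb C^n$: $a_k=\langle a,u_k\rangle-\lambda^{(1)}_k$, $b_k=\langle b,u_k\rangle-\lambda^{(c)}_k$; $K=\{(a,b):a_k\geqslant|b_k|\ \forall k\}$; $V_k=\{a_k=0=b_k\}$, $W_k=\{a_k=|b_k|\}$; $J(a,b)=\{k:(a,b)\in V_k\}$, $L(a,b)=\{k:(a,b)\in W_k\}$ (so $J\subset L$). For $A\subset\{1,\dots,d\}$ let $\mathbb R_A=\mathrm{span}\{e_k:k\in A\}$ and $A'$ its complement. Let $\mathfrak n_L=\mathfrak n\cap\mathbb R_L$ and $\mathfrak n_{L,J}\subset\mathbb R_{L\setminus J}$ the image of $\mathfrak n_L$ under orthogonal projection to $\mathbb R_{J'}$. An element of $\mathfrak n_{L,J}\otimes(\mathbb R\times\mathbb C)$ is written $(\theta^{(1)},\theta^{(c)})$ with $\theta^{(1)}\in\mathfrak n_{L,J}$, $\theta^{(c)}=\theta^{(2)}+i\theta^{(3)}$, $\theta^{(2)},\theta^{(3)}\in\mathfrak n_{L,J}$, with components $\theta^{(\cdot)}_k$. *)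

theory Defs
  imports "HOL-Analysis.Analysis"
begin

text \<open>The weights u_k are given as u :: 'd => real^'n (integrality is an assumption of the theorem).
  lam1, lam2, lam3 are the real parameters lambda^(1), lambda^(2), lambda^(3).\<close>

type_synonym 'd pt = "(complex^'d) \<times> (complex^'d)"

definition nfrak :: "('d::finite \<Rightarrow> real^'n::finite) \<Rightarrow> (real^'d) set" where
  "nfrak u = {X. (\<Sum>k\<in>UNIV. X$k *\<^sub>R u k) = 0}"

text \<open>Vector field induced by X in R^d (derivative of the torus action) at p.\<close>
definition vf :: "real^'d::finite \<Rightarrow> 'd pt \<Rightarrow> 'd pt" where
  "vf X p = ((\<chi> k. \<i> * of_real (X$k) * (fst p $ k)), (\<chi> k. \<i> * of_real (X$k) * (snd p $ k)))"

definition Iop :: "'d::finite pt \<Rightarrow> 'd pt" where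
  "Iop p = ((\<chi> k. \<i> * (fst p $ k)), (\<chi> k. - \<i> * (snd p $ k)))"

definition Sop :: "'d::finite pt \<Rightarrow> 'd pt" where
  "Sop p = (snd p, fst p)"

definition Top :: "'d::finite pt \<Rightarrow> 'd pt" where
  "Top p = Iop (Sop p)"

text \<open>p lies in mu^{-1}(0): mu_I(p) = 0 and (mu_S + i mu_T)(p) = 0 as elements of (the complexified)
  dual of n; iota^* e_k is the functional X |-> X_k.\<close>
definition mu_zero :: "('d::finite \<Rightarrow> real^'n::finite) \<Rightarrow> ('d \<Rightarrow> real) \<Rightarrow> ('d \<Rightarrow> real) \<Rightarrow> ('d \<Rightarrow> real)
    \<Rightarrow> 'd pt \<Rightarrow> bool" where
  "mu_zero u lam1 lam2 lam3 p \<longleftrightarrow>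
     (\<forall>X\<in>nfrak u. (\<Sum>k\<in>UNIV. ((cmod (fst p $ k))\<^sup>2 / 2 + (cmod (snd p $ k))\<^sup>2 / 2 + lam1 k) * X$k) = 0) \<and>
     (\<forall>X\<in>nfrak u. (\<Sum>k\<in>UNIV. (\<i> * (fst p $ k) * cnj (snd p $ k) + Complex (lam2 k) (lam3 k))
                                 * of_real (X$k)) = 0)"

definition locally_free :: "('d::finite \<Rightarrow> real^'n::finite) \<Rightarrow> ('d \<Rightarrow> real) \<Rightarrow> ('d \<Rightarrow> real) \<Rightarrow> ('d \<Rightarrow> real) \<Rightarrow> bool" where
  "locally_free u lam1 lam2 lam3 \<longleftrightarrow>
     (\<forall>p. mu_zero u lam1 lam2 lam3 p \<longrightarrow> (\<forall>X\<in>nfrak u. vf X p = 0 \<longrightarrow> X = 0))"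

definition condS :: "('d::finite \<Rightarrow> real^'n::finite) \<Rightarrow> ('d \<Rightarrow> real) \<Rightarrow> ('d \<Rightarrow> real) \<Rightarrow> ('d \<Rightarrow> real) \<Rightarrow> bool" where
  "condS u lam1 lam2 lam3 \<longleftrightarrow>
     \<not> (\<exists>p. mu_zero u lam1 lam2 lam3 p \<and>
          (\<exists>X1\<in>nfrak u. \<exists>X2\<in>nfrak u. \<exists>X3\<in>nfrak u. (X1, X2, X3) \<noteq> (0, 0, 0) \<and>
              Iop (vf X1 p) + Sop (vf X2 p) + Top (vf X3 p) = 0))"

definition acoord :: "('d::finite \<Rightarrow> real^'n::finite) \<Rightarrow> ('d \<Rightarrow> real) \<Rightarrow> real^'n \<Rightarrow> 'd \<Rightarrow> real" where
  "acoord u lam1 a k = a \<bullet> u k - lam1 k"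

definition bcoord :: "('d::finite \<Rightarrow> real^'n::finite) \<Rightarrow> ('d \<Rightarrow> real) \<Rightarrow> ('d \<Rightarrow> real) \<Rightarrow> complex^'n \<Rightarrow> 'd \<Rightarrow> complex" where
  "bcoord u lam2 lam3 b k = (\<Sum>j\<in>UNIV. b$j * of_real (u k $ j)) - Complex (lam2 k) (lam3 k)"

definition Kset :: "('d::finite \<Rightarrow> real^'n::finite) \<Rightarrow> ('d \<Rightarrow> real) \<Rightarrow> ('d \<Rightarrow> real) \<Rightarrow> ('d \<Rightarrow> real)
    \<Rightarrow> ((real^'n) \<times> (complex^'n)) set" where
  "Kset u lam1 lam2 lam3 = {(a, b). \<forall>k. acoord u lam1 a k \<ge> cmod (bcoord u lam2 lam3 b k)}"

definition Jset :: "('d::finite \<Rightarrow> real^'n::finite) \<Rightarrow> ('d \<Rightarrow> real) \<Rightarrow> ('d \<Rightarrow> real) \<Rightarrow> ('d \<Rightarrow> real)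
    \<Rightarrow> real^'n \<Rightarrow> complex^'n \<Rightarrow> 'd set" where
  "Jset u lam1 lam2 lam3 a b = {k. acoord u lam1 a k = 0 \<and> bcoord u lam2 lam3 b k = 0}"

definition Lset :: "('d::finite \<Rightarrow> real^'n::finite) \<Rightarrow> ('d \<Rightarrow> real) \<Rightarrow> ('d \<Rightarrow> real) \<Rightarrow> ('d \<Rightarrow> real)
    \<Rightarrow> real^'n \<Rightarrow> complex^'n \<Rightarrow> 'd set" where
  "Lset u lam1 lam2 lam3 a b = {k. acoord u lam1 a k = cmod (bcoord u lam2 lam3 b k)}"

definition nL :: "('d::finite \<Rightarrow> real^'n::finite) \<Rightarrow> 'd set \<Rightarrow> (real^'d) set" where
  "nL u L = {X \<in> nfrak u. \<forall>k. k \<notin> L \<longrightarrow> X$k = 0}"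

definition projR :: "'d::finite set \<Rightarrow> real^'d \<Rightarrow> real^'d" where
  "projR A X = (\<chi> k. if k \<in> A then X$k else 0)"

definition nLJ :: "('d::finite \<Rightarrow> real^'n::finite) \<Rightarrow> 'd set \<Rightarrow> 'd set \<Rightarrow> (real^'d) set" where
  "nLJ u L J = projR (- J) ` nL u L"

text \<open>Lambda_{(a,b)}: an element (theta1, theta2 + i theta3) of n_{L,J} \<otimes> (R \<times> C) is given by the
  triple (theta1, theta2, theta3) in n_{L,J}^3; the value is an element of C^{L-J}.\<close>
definition Lambda :: "('d::finite \<Rightarrow> real^'n::finite) \<Rightarrow> ('d \<Rightarrow> real) \<Rightarrow> ('d \<Rightarrow> real) \<Rightarrow> ('d \<Rightarrow> real)
    \<Rightarrow> real^'n \<Rightarrow> complex^'n \<Rightarrow> (real^'d) \<times> (real^'d) \<times> (real^'d) \<Rightarrow> ('d \<Rightarrow> complex)" where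
  "Lambda u lam1 lam2 lam3 a b =
     (\<lambda>(t1, t2, t3). restrict
        (\<lambda>k. bcoord u lam2 lam3 b k * of_real (t1$k) + of_real (acoord u lam1 a k) * Complex (t2$k) (t3$k))
        (Lset u lam1 lam2 lam3 a b - Jset u lam1 lam2 lam3 a b))"

definition Lambda_dom :: "('d::finite \<Rightarrow> real^'n::finite) \<Rightarrow> ('d \<Rightarrow> real) \<Rightarrow> ('d \<Rightarrow> real) \<Rightarrow> ('d \<Rightarrow> real)
    \<Rightarrow> real^'n \<Rightarrow> complex^'n \<Rightarrow> ((real^'d) \<times> (real^'d) \<times> (real^'d)) set" where
  "Lambda_dom u lam1 lam2 lam3 a b =
     (let V = nLJ u (Lset u lam1 lam2 lam3 a b) (Jset u lam1 lam2 lam3 a b) in V \<times> V \<times> V)"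

end

theory Submission
  imports Defs
begin

definition ecomp :: "real \<Rightarrow> real \<Rightarrow> real \<Rightarrow> complex \<Rightarrow> complex \<Rightarrow> bool" where
  "ecomp x1 x2 x3 z w \<longleftrightarrow> (- of_real x1 * z + \<i> * of_real x2 * w - of_real x3 * w = 0 \<and>
      of_real x1 * w + \<i> * of_real x2 * z + of_real x3 * z = 0)"

lemma vf_eq_iff:
  "Iop (vf X1 p) + Sop (vf X2 p) + Top (vf X3 p) = 0 \<longleftrightarrow>
   (\<forall>k. ecomp (X1$k) (X2$k) (X3$k) (fst p $ k) (snd p $ k))"
  unfolding ecomp_def Iop_def Sop_def Top_def vf_def
  by (auto simp: prod_eq_iff vec_eq_iff algebra_simps)

lemma ident1:
  fixes z w :: complex
  shows "cnj w * (- of_real x1 * z + \<i> * of_real x2 * w - of_real x3 * w) =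
     \<i> * (of_real x1 * (\<i> * z * cnj w) + of_real ((cmod w)\<^sup>2) * Complex x2 x3)"
  by (simp add: complex_eq_iff algebra_simps power2_eq_square cmod_def)

lemma ident2:
  fixes z w :: complex
  shows "cnj z * (of_real x1 * w + \<i> * of_real x2 * z + of_real x3 * z) =
     \<i> * cnj (of_real x1 * (\<i> * z * cnj w) + of_real ((cmod z)\<^sup>2) * Complex x2 x3)"
  by (simp add: complex_eq_iff algebra_simps power2_eq_square cmod_def)

lemma ecomp_neq:
  assumes "cmod z \<noteq> cmod w" "ecomp x1 x2 x3 z w"
  shows "x1 = 0 \<and> x2 = 0 \<and> x3 = 0"
proof -
  have e1: "of_real x1 * z = (\<i> * of_real x2 - of_real x3) * w"
    using assms(2) unfolding ecomp_def by (auto simp: algebra_simps)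
  have e2: "of_real x1 * w = - ((\<i> * of_real x2 + of_real x3) * z)"
    using assms(2) unfolding ecomp_def eq_neg_iff_add_eq_0 by (auto simp: algebra_simps)
  define r where "r = cmod (Complex x3 x2)"
  have m1: "cmod (\<i> * of_real x2 - of_real x3) = r" unfolding r_def cmod_def by simp
  have m2: "cmod (\<i> * of_real x2 + of_real x3) = r" unfolding r_def cmod_def by simp
  have n1: "\<bar>x1\<bar> * cmod z = r * cmod w" using arg_cong[OF e1, of cmod] m1 by (simp add: norm_mult)
  have n2: "\<bar>x1\<bar> * cmod w = r * cmod z" using arg_cong[OF e2, of cmod] m2 by (simp add: norm_mult)
  have "(\<bar>x1\<bar> + r) * (cmod z - cmod w) = 0" using n1 n2 by (simp add: algebra_simps)
  hence "\<bar>x1\<bar> + r = 0" using assms(1) by simp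
  moreover have "r \<ge> 0" unfolding r_def by simp
  ultimately have "x1 = 0" "r = 0" by auto
  then show ?thesis unfolding r_def by (auto simp: complex_eq_iff)
qed

lemma ecomp_eq:
  assumes "cmod z = cmod w"
  shows "ecomp x1 x2 x3 z w \<longleftrightarrow>
    of_real x1 * (\<i> * z * cnj w) + of_real ((cmod z)\<^sup>2 / 2 + (cmod w)\<^sup>2 / 2) * Complex x2 x3 = 0"
proof (cases "w = 0")
  case True
  then have "z = 0" using assms by simp
  then show ?thesis using True by (simp add: ecomp_def)
next
  case False
  then have z0: "z \<noteq> 0" using assms by auto
  have aw: "(cmod z)\<^sup>2 / 2 + (cmod w)\<^sup>2 / 2 = (cmod w)\<^sup>2" using assms by simp
  have az: "(cmod z)\<^sup>2 / 2 + (cmod w)\<^sup>2 / 2 = (cmod z)\<^sup>2" using assms by simp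
  show ?thesis
  proof
    assume "ecomp x1 x2 x3 z w"
    then have "cnj w * (- of_real x1 * z + \<i> * of_real x2 * w - of_real x3 * w) = 0"
      unfolding ecomp_def by simp
    then show "of_real x1 * (\<i> * z * cnj w) + of_real ((cmod z)\<^sup>2 / 2 + (cmod w)\<^sup>2 / 2) * Complex x2 x3 = 0"
      unfolding ident1 aw by simp
  next
    assume h: "of_real x1 * (\<i> * z * cnj w) + of_real ((cmod z)\<^sup>2 / 2 + (cmod w)\<^sup>2 / 2) * Complex x2 x3 = 0"
    have "cnj w * (- of_real x1 * z + \<i> * of_real x2 * w - of_real x3 * w) = 0"
      unfolding ident1 using h unfolding aw by simp
    moreover have "cnj z * (of_real x1 * w + \<i> * of_real x2 * z + of_real x3 * z) = 0"
      unfolding ident2 using h unfolding az by simp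
    ultimately show "ecomp x1 x2 x3 z w" unfolding ecomp_def using False z0 by simp
  qed
qed

lemma perp_range:
  fixes v :: "real^'d::finite" and u :: "'d \<Rightarrow> real^'n::finite"
  assumes "\<forall>X\<in>nfrak u. (\<Sum>k\<in>UNIV. v$k * X$k) = 0"
  shows "\<exists>a. \<forall>k. v$k = a \<bullet> u k"
proof -
  define f where "f = (\<lambda>a::real^'n. \<chi> k. a \<bullet> u k)"
  have lin: "linear f" unfolding f_def
    by (rule linearI) (auto simp: vec_eq_iff inner_add_left)
  let ?S = "range f"
  have sub: "subspace ?S" using lin by (simp add: linear_subspace_image)
  obtain y zz where y: "y \<in> span ?S" and o: "\<And>x. x \<in> span ?S \<Longrightarrow> orthogonal zz x"
    and v: "v = y + zz"
    using orthogonal_subspace_decomp_exists by blast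
  have yS: "y \<in> ?S" using y sub by (metis span_eq_iff)
  define c where "c = (\<Sum>k\<in>UNIV. zz$k *\<^sub>R u k)"
  have "orthogonal zz (f c)" using o by (simp add: span_base)
  then have "(\<Sum>k\<in>UNIV. zz$k * (c \<bullet> u k)) = 0"
    unfolding orthogonal_def inner_vec_def f_def by simp
  then have "c \<bullet> c = 0" unfolding c_def
    by (simp add: inner_sum_right inner_sum_left algebra_simps)
  then have "c = 0" by simp
  then have zn: "zz \<in> nfrak u" unfolding nfrak_def c_def by simp
  have "(\<Sum>k\<in>UNIV. v$k * zz$k) = 0" using assms zn by blast
  then have "v \<bullet> zz = 0" unfolding inner_vec_def by simp
  moreover have "y \<bullet> zz = 0" using o[of y] y by (simp add: orthogonal_def inner_commute)
  ultimately have "zz \<bullet> zz = 0" unfolding v by (simp add: inner_add_left)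
  then have "zz = 0" by simp
  then have "v \<in> ?S" using v yS by simp
  then show ?thesis unfolding f_def by auto
qed

definition AA :: "'d::finite pt \<Rightarrow> 'd \<Rightarrow> real" where
  "AA p k = (cmod (fst p $ k))\<^sup>2 / 2 + (cmod (snd p $ k))\<^sup>2 / 2"

definition BB :: "'d::finite pt \<Rightarrow> 'd \<Rightarrow> complex" where
  "BB p k = \<i> * (fst p $ k) * cnj (snd p $ k)"

lemma sum_cvec:
  fixes ar ai :: "real^'n::finite"
  shows "(\<Sum>j\<in>UNIV. (\<chi> j. Complex (ar$j) (ai$j))$j * of_real (x $ j)) = Complex (ar \<bullet> x) (ai \<bullet> x)"
  by (simp add: complex_eq_iff Re_sum Im_sum inner_vec_def)

lemma M1:
  assumes "mu_zero u lam1 lam2 lam3 p"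
  shows "\<exists>a b. \<forall>k. acoord u lam1 a k = AA p k \<and> bcoord u lam2 lam3 b k = BB p k"
proof -
  have h1: "\<forall>X\<in>nfrak u. (\<Sum>k\<in>UNIV. (\<chi> k. AA p k + lam1 k)$k * X$k) = 0"
    using assms unfolding mu_zero_def AA_def by simp
  obtain a where a: "\<forall>k. AA p k + lam1 k = a \<bullet> u k" using perp_range[OF h1] by auto
  have h2: "\<forall>X\<in>nfrak u. (\<Sum>k\<in>UNIV. (\<chi> k. Re (BB p k + Complex (lam2 k) (lam3 k)))$k * X$k) = 0"
  proof
    fix X assume "X \<in> nfrak u"
    then have "(\<Sum>k\<in>UNIV. (BB p k + Complex (lam2 k) (lam3 k)) * of_real (X$k)) = 0"
      using assms unfolding mu_zero_def BB_def by simp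
    then have "Re (\<Sum>k\<in>UNIV. (BB p k + Complex (lam2 k) (lam3 k)) * of_real (X$k)) = 0" by simp
    then show "(\<Sum>k\<in>UNIV. (\<chi> k. Re (BB p k + Complex (lam2 k) (lam3 k)))$k * X$k) = 0"
      by (simp add: Re_sum)
  qed
  have h3: "\<forall>X\<in>nfrak u. (\<Sum>k\<in>UNIV. (\<chi> k. Im (BB p k + Complex (lam2 k) (lam3 k)))$k * X$k) = 0"
  proof
    fix X assume "X \<in> nfrak u"
    then have "(\<Sum>k\<in>UNIV. (BB p k + Complex (lam2 k) (lam3 k)) * of_real (X$k)) = 0"
      using assms unfolding mu_zero_def BB_def by simp
    then have "Im (\<Sum>k\<in>UNIV. (BB p k + Complex (lam2 k) (lam3 k)) * of_real (X$k)) = 0" by simp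
    then show "(\<Sum>k\<in>UNIV. (\<chi> k. Im (BB p k + Complex (lam2 k) (lam3 k)))$k * X$k) = 0"
      by (simp add: Im_sum)
  qed
  obtain ar where ar: "\<forall>k. Re (BB p k + Complex (lam2 k) (lam3 k)) = ar \<bullet> u k"
    using perp_range[OF h2] by auto
  obtain ai where ai: "\<forall>k. Im (BB p k + Complex (lam2 k) (lam3 k)) = ai \<bullet> u k"
    using perp_range[OF h3] by auto
  define b where "b = (\<chi> j. Complex (ar$j) (ai$j))"
  have "\<forall>k. acoord u lam1 a k = AA p k \<and> bcoord u lam2 lam3 b k = BB p k"
  proof
    fix k
    have "bcoord u lam2 lam3 b k = Complex (ar \<bullet> u k) (ai \<bullet> u k) - Complex (lam2 k) (lam3 k)"
      unfolding bcoord_def b_def sum_cvec ..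
    also have "\<dots> = BB p k" using ar[rule_format, of k, symmetric] ai[rule_format, of k, symmetric] by (simp add: complex_eq_iff)
    finally show "acoord u lam1 a k = AA p k \<and> bcoord u lam2 lam3 b k = BB p k"
      using a unfolding acoord_def by (metis add_diff_cancel)
  qed
  then show ?thesis by blast
qed

lemma pt_exists:
  fixes \<alpha> :: real and \<beta> :: complex
  assumes "\<alpha> \<ge> cmod \<beta>"
  shows "\<exists>z w. (cmod z)\<^sup>2 / 2 + (cmod w)\<^sup>2 / 2 = \<alpha> \<and> \<i> * z * cnj w = \<beta>"
proof -
  define A where "A = sqrt (\<alpha> + cmod \<beta>)"
  define B where "B = sqrt (\<alpha> - cmod \<beta>)"
  have A2: "A\<^sup>2 = \<alpha> + cmod \<beta>" proof -
    have "0 \<le> \<alpha> + cmod \<beta>" using assms norm_ge_zero[of \<beta>] by linarith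
    then show ?thesis unfolding A_def by simp
  qed
  have B2: "B\<^sup>2 = \<alpha> - cmod \<beta>" unfolding B_def using assms by simp
  have BA1: "0 \<le> B" unfolding B_def using assms by simp
  have BA2: "B \<le> A" unfolding A_def B_def by (rule real_sqrt_le_mono) simp
  note BA = BA1 BA2
  define rz where "rz = (A + B) / sqrt 2"
  define rw where "rw = (A - B) / sqrt 2"
  have rz0: "rz \<ge> 0" and rw0: "rw \<ge> 0" unfolding rz_def rw_def using BA by auto
  have s2: "(sqrt 2)\<^sup>2 = (2::real)" by simp
  have sq: "rz\<^sup>2 / 2 + rw\<^sup>2 / 2 = \<alpha>"
    unfolding rz_def rw_def power_divide s2 using A2 B2 by (simp add: power2_eq_square field_simps)
  have pr: "rz * rw = cmod \<beta>"
    unfolding rz_def rw_def using A2 B2 by (simp add: power2_eq_square field_simps)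
  define e where "e = (if \<beta> = 0 then 1 else - \<i> * \<beta> / of_real (cmod \<beta>))"
  have e1: "cmod e = 1" unfolding e_def by (simp add: norm_mult norm_divide)
  have e2: "of_real (cmod \<beta>) * \<i> * e = \<beta>" unfolding e_def by auto
  define z where "z = of_real rz * e"
  define w where "w = (of_real rw :: complex)"
  have "(cmod z)\<^sup>2 / 2 + (cmod w)\<^sup>2 / 2 = \<alpha>"
    unfolding z_def w_def using e1 rz0 rw0 sq by (simp add: norm_mult)
  moreover have "\<i> * z * cnj w = \<beta>"
  proof -
    have "\<i> * z * cnj w = of_real (rz * rw) * \<i> * e" unfolding z_def w_def by (simp add: algebra_simps)
    then show ?thesis using pr e2 by simp
  qed
  ultimately show ?thesis by blast
qed

lemma M2:
  assumes "(a, b) \<in> Kset u lam1 lam2 lam3"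
  shows "\<exists>p. mu_zero u lam1 lam2 lam3 p \<and> (\<forall>k. AA p k = acoord u lam1 a k \<and> BB p k = bcoord u lam2 lam3 b k)"
proof -
  have "\<forall>k. \<exists>zw. (cmod (fst zw))\<^sup>2 / 2 + (cmod (snd zw))\<^sup>2 / 2 = acoord u lam1 a k \<and>
      \<i> * fst zw * cnj (snd zw) = bcoord u lam2 lam3 b k"
    using assms pt_exists unfolding Kset_def by fastforce
  then obtain g where g: "\<And>k. (cmod (fst (g k)))\<^sup>2 / 2 + (cmod (snd (g k)))\<^sup>2 / 2 = acoord u lam1 a k \<and>
      \<i> * fst (g k) * cnj (snd (g k)) = bcoord u lam2 lam3 b k" by metis
  define p where "p = ((\<chi> k. fst (g k)), (\<chi> k. snd (g k)))"
  have AB: "\<forall>k. AA p k = acoord u lam1 a k \<and> BB p k = bcoord u lam2 lam3 b k"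
    unfolding p_def AA_def BB_def using g by simp
  have "mu_zero u lam1 lam2 lam3 p"
    unfolding mu_zero_def
  proof safe
    fix X assume X: "X \<in> nfrak u"
    have "(\<Sum>k\<in>UNIV. (AA p k + lam1 k) * X$k) = (\<Sum>k\<in>UNIV. X$k * (a \<bullet> u k))"
      using AB unfolding acoord_def by (simp add: mult.commute)
    also have "\<dots> = a \<bullet> (\<Sum>k\<in>UNIV. X$k *\<^sub>R u k)" by (simp add: inner_sum_right)
    also have "\<dots> = 0" using X unfolding nfrak_def by simp
    finally show "(\<Sum>k\<in>UNIV. ((cmod (fst p $ k))\<^sup>2 / 2 + (cmod (snd p $ k))\<^sup>2 / 2 + lam1 k) * X$k) = 0"
      unfolding AA_def .
  next
    fix X assume X: "X \<in> nfrak u"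
    have "(\<Sum>k\<in>UNIV. (BB p k + Complex (lam2 k) (lam3 k)) * of_real (X$k))
        = (\<Sum>k\<in>UNIV. \<Sum>j\<in>UNIV. b$j * of_real (X$k * u k $ j))"
      using AB unfolding bcoord_def by (simp add: sum_distrib_left sum_distrib_right algebra_simps)
    also have "\<dots> = (\<Sum>j\<in>UNIV. b$j * of_real (\<Sum>k\<in>UNIV. X$k * u k $ j))"
      by (subst sum.swap) (simp add: sum_distrib_left)
    also have "\<dots> = 0"
    proof -
      have "\<And>j. (\<Sum>k\<in>UNIV. X$k * u k $ j) = (\<Sum>k\<in>UNIV. X$k *\<^sub>R u k) $ j" by (simp add: sum_component)
      moreover have "(\<Sum>k\<in>UNIV. X$k *\<^sub>R u k) $ j = 0" for j using X unfolding nfrak_def by simp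
      ultimately have z: "\<And>j. (\<Sum>k\<in>UNIV. X$k * u k $ j) = 0" by simp
      show ?thesis by (simp only: z) simp
    qed
    finally show "(\<Sum>k\<in>UNIV. (\<i> * (fst p $ k) * cnj (snd p $ k) + Complex (lam2 k) (lam3 k)) * of_real (X$k)) = 0"
      unfolding BB_def .
  qed
  then show ?thesis using AB by blast
qed

lemma JL:
  assumes h: "\<forall>k. acoord u lam1 a k = AA p k \<and> bcoord u lam2 lam3 b k = BB p k"
  shows "(a, b) \<in> Kset u lam1 lam2 lam3"
    and "Jset u lam1 lam2 lam3 a b = {k. fst p $ k = 0 \<and> snd p $ k = 0}"
    and "Lset u lam1 lam2 lam3 a b = {k. cmod (fst p $ k) = cmod (snd p $ k)}"
proof -
  have cb: "cmod (BB p k) = cmod (fst p $ k) * cmod (snd p $ k)" for k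
    unfolding BB_def by (simp add: norm_mult)
  have ge: "AA p k - cmod (BB p k) = (cmod (fst p $ k) - cmod (snd p $ k))\<^sup>2 / 2" for k
    unfolding cb AA_def by (simp add: power2_eq_square algebra_simps)
  show "(a, b) \<in> Kset u lam1 lam2 lam3"
  proof -
    have "cmod (BB p k) \<le> AA p k" for k
    proof -
      have "0 \<le> (cmod (fst p $ k) - cmod (snd p $ k))\<^sup>2 / 2" by simp
      then show ?thesis using ge[of k] by linarith
    qed
    then show ?thesis unfolding Kset_def using h by auto
  qed
  show "Jset u lam1 lam2 lam3 a b = {k. fst p $ k = 0 \<and> snd p $ k = 0}"
  proof -
    have "AA p k = 0 \<longleftrightarrow> fst p $ k = 0 \<and> snd p $ k = 0" for k
    proof -
      have "AA p k = 0 \<longleftrightarrow> (cmod (fst p $ k))\<^sup>2 = 0 \<and> (cmod (snd p $ k))\<^sup>2 = 0" unfolding AA_def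
        using zero_le_power2[of "cmod (fst p $ k)"] zero_le_power2[of "cmod (snd p $ k)"] by linarith
      also have "\<dots> \<longleftrightarrow> fst p $ k = 0 \<and> snd p $ k = 0" by simp
      finally show ?thesis .
    qed
    then show ?thesis unfolding Jset_def using h by (auto simp: BB_def)
  qed
  show "Lset u lam1 lam2 lam3 a b = {k. cmod (fst p $ k) = cmod (snd p $ k)}"
  proof -
    have "AA p k = cmod (BB p k) \<longleftrightarrow> cmod (fst p $ k) = cmod (snd p $ k)" for k
      using ge[of k] by (auto simp: power2_eq_square)
    then show ?thesis unfolding Lset_def using h by auto
  qed
qed

lemma nfrak_diff: "X \<in> nfrak u \<Longrightarrow> Y \<in> nfrak u \<Longrightarrow> X - Y \<in> nfrak u"
  unfolding nfrak_def by (simp add: scaleR_diff_left sum_subtractf)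

lemma ecomp_zero: "ecomp x1 x2 x3 0 0" "ecomp 0 0 0 z w"
  unfolding ecomp_def by simp_all

lemma Lambda_out: "k \<notin> Lset u lam1 lam2 lam3 a b - Jset u lam1 lam2 lam3 a b \<Longrightarrow>
  Lambda u lam1 lam2 lam3 a b t k = undefined"
proof -
  assume k: "k \<notin> Lset u lam1 lam2 lam3 a b - Jset u lam1 lam2 lam3 a b"
  obtain t1 t2 t3 where "t = (t1, t2, t3)" by (cases t)
  then show ?thesis unfolding Lambda_def using k by (simp only: case_prod_conv restrict_def if_False)
qed

theorem proposition5p9:
  fixes u :: "'d::finite \<Rightarrow> real^'n::finite"
    and lam1 lam2 lam3 :: "'d \<Rightarrow> real"
  assumes integral: "\<forall>k j. u k $ j \<in> \<int>"
    and spanning: "span (range u) = UNIV"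
    and locfree: "locally_free u lam1 lam2 lam3"
  shows "condS u lam1 lam2 lam3 \<longleftrightarrow>
           (\<forall>(a, b) \<in> Kset u lam1 lam2 lam3.
              inj_on (Lambda u lam1 lam2 lam3 a b) (Lambda_dom u lam1 lam2 lam3 a b))"
proof
  assume S: "condS u lam1 lam2 lam3"
  show "\<forall>(a, b) \<in> Kset u lam1 lam2 lam3.
              inj_on (Lambda u lam1 lam2 lam3 a b) (Lambda_dom u lam1 lam2 lam3 a b)"
  proof safe
    fix a b assume K: "(a, b) \<in> Kset u lam1 lam2 lam3"
    obtain p where mz: "mu_zero u lam1 lam2 lam3 p"
      and h: "\<forall>k. AA p k = acoord u lam1 a k \<and> BB p k = bcoord u lam2 lam3 b k"
      using M2[OF K] by blast
    have h': "\<forall>k. acoord u lam1 a k = AA p k \<and> bcoord u lam2 lam3 b k = BB p k" using h by simp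
    define L where "L = Lset u lam1 lam2 lam3 a b"
    define J where "J = Jset u lam1 lam2 lam3 a b"
    have Jc: "J = {k. fst p $ k = 0 \<and> snd p $ k = 0}" unfolding J_def using JL(2)[OF h'] .
    have Lc: "L = {k. cmod (fst p $ k) = cmod (snd p $ k)}" unfolding L_def using JL(3)[OF h'] .
    show "inj_on (Lambda u lam1 lam2 lam3 a b) (Lambda_dom u lam1 lam2 lam3 a b)"
    proof (rule inj_onI, clarify)
      fix t1 t2 t3 s1 s2 s3
      assume t: "(t1, t2, t3) \<in> Lambda_dom u lam1 lam2 lam3 a b"
        and s: "(s1, s2, s3) \<in> Lambda_dom u lam1 lam2 lam3 a b"
        and eq: "Lambda u lam1 lam2 lam3 a b (t1, t2, t3) = Lambda u lam1 lam2 lam3 a b (s1, s2, s3)"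
      obtain X1 X2 X3 where X: "X1 \<in> nL u L" "X2 \<in> nL u L" "X3 \<in> nL u L"
        and tX: "t1 = projR (- J) X1" "t2 = projR (- J) X2" "t3 = projR (- J) X3"
        using t unfolding Lambda_dom_def nLJ_def L_def[symmetric] J_def[symmetric] Let_def by auto
      obtain Y1 Y2 Y3 where Y: "Y1 \<in> nL u L" "Y2 \<in> nL u L" "Y3 \<in> nL u L"
        and sY: "s1 = projR (- J) Y1" "s2 = projR (- J) Y2" "s3 = projR (- J) Y3"
        using s unfolding Lambda_dom_def nLJ_def L_def[symmetric] J_def[symmetric] Let_def by auto
      define D1 where "D1 = X1 - Y1"
      define D2 where "D2 = X2 - Y2"
      define D3 where "D3 = X3 - Y3"
      have Dn: "D1 \<in> nfrak u" "D2 \<in> nfrak u" "D3 \<in> nfrak u"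
        unfolding D1_def D2_def D3_def using X Y nfrak_diff unfolding nL_def by auto
      have DL: "k \<notin> L \<Longrightarrow> D1$k = 0 \<and> D2$k = 0 \<and> D3$k = 0" for k
        unfolding D1_def D2_def D3_def using X Y unfolding nL_def by auto
      have ec: "ecomp (D1$k) (D2$k) (D3$k) (fst p $ k) (snd p $ k)" for k
      proof (cases "k \<in> L - J")
        case True
        have e: "bcoord u lam2 lam3 b k * of_real (t1$k) + of_real (acoord u lam1 a k) * Complex (t2$k) (t3$k)
             = bcoord u lam2 lam3 b k * of_real (s1$k) + of_real (acoord u lam1 a k) * Complex (s2$k) (s3$k)"
          using fun_cong[OF eq, of k] True unfolding Lambda_def L_def[symmetric] J_def[symmetric] by simp
        have "of_real (D1$k) * BB p k + of_real (AA p k) * Complex (D2$k) (D3$k) = 0"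
          using e True h unfolding tX sY D1_def D2_def D3_def projR_def
          by (simp add: complex_eq_iff algebra_simps)
        moreover have "cmod (fst p $ k) = cmod (snd p $ k)" using True Lc by simp
        ultimately show ?thesis using ecomp_eq unfolding AA_def BB_def by (simp add: mult.commute)
      next
        case False
        then show ?thesis using DL Jc ecomp_zero by auto
      qed
      have "Iop (vf D1 p) + Sop (vf D2 p) + Top (vf D3 p) = 0" using ec vf_eq_iff by blast
      then have "(D1, D2, D3) = (0, 0, 0)" using S mz Dn unfolding condS_def by blast
      then show "t1 = s1 \<and> (t2, t3) = (s2, s3)"
        unfolding tX sY D1_def D2_def D3_def by simp
    qed
  qed
next
  assume I: "\<forall>(a, b) \<in> Kset u lam1 lam2 lam3.
              inj_on (Lambda u lam1 lam2 lam3 a b) (Lambda_dom u lam1 lam2 lam3 a b)"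
  show "condS u lam1 lam2 lam3"
    unfolding condS_def
  proof (rule notI)
    assume "\<exists>p. mu_zero u lam1 lam2 lam3 p \<and>
          (\<exists>X1\<in>nfrak u. \<exists>X2\<in>nfrak u. \<exists>X3\<in>nfrak u. (X1, X2, X3) \<noteq> (0, 0, 0) \<and>
              Iop (vf X1 p) + Sop (vf X2 p) + Top (vf X3 p) = 0)"
    then obtain p X1 X2 X3 where mz: "mu_zero u lam1 lam2 lam3 p" and Xn: "X1 \<in> nfrak u" "X2 \<in> nfrak u" "X3 \<in> nfrak u"
      and nz: "(X1, X2, X3) \<noteq> (0, 0, 0)"
      and ve: "Iop (vf X1 p) + Sop (vf X2 p) + Top (vf X3 p) = 0" by blast
    obtain a b where h': "\<forall>k. acoord u lam1 a k = AA p k \<and> bcoord u lam2 lam3 b k = BB p k"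
      using M1[OF mz] by blast
    have K: "(a, b) \<in> Kset u lam1 lam2 lam3" using JL(1)[OF h'] .
    define L where "L = Lset u lam1 lam2 lam3 a b"
    define J where "J = Jset u lam1 lam2 lam3 a b"
    have Jc: "J = {k. fst p $ k = 0 \<and> snd p $ k = 0}" unfolding J_def using JL(2)[OF h'] .
    have Lc: "L = {k. cmod (fst p $ k) = cmod (snd p $ k)}" unfolding L_def using JL(3)[OF h'] .
    have ec: "\<And>k. ecomp (X1$k) (X2$k) (X3$k) (fst p $ k) (snd p $ k)" using ve vf_eq_iff by blast
    have XL: "k \<notin> L \<Longrightarrow> X1$k = 0 \<and> X2$k = 0 \<and> X3$k = 0" for k
      using ecomp_neq[OF _ ec[of k]] Lc by auto
    have XnL: "X1 \<in> nL u L" "X2 \<in> nL u L" "X3 \<in> nL u L" using Xn XL unfolding nL_def by auto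
    define t where "t = (projR (- J) X1, projR (- J) X2, projR (- J) X3)"
    have tD: "t \<in> Lambda_dom u lam1 lam2 lam3 a b"
      unfolding t_def Lambda_dom_def nLJ_def L_def[symmetric] J_def[symmetric] Let_def using XnL by auto
    have 0: "(0::real^'d) \<in> nL u L" unfolding nL_def nfrak_def by simp
    have p0: "projR (- J) 0 = (0::real^'d)" unfolding projR_def by (simp add: vec_eq_iff)
    have zD: "(0, 0, 0) \<in> Lambda_dom u lam1 lam2 lam3 a b"
      unfolding Lambda_dom_def nLJ_def L_def[symmetric] J_def[symmetric] Let_def using 0 p0
      by (metis image_eqI mem_Sigma_iff)
    have "Lambda u lam1 lam2 lam3 a b t = Lambda u lam1 lam2 lam3 a b (0, 0, 0)"
    proof
      fix k
      show "Lambda u lam1 lam2 lam3 a b t k = Lambda u lam1 lam2 lam3 a b (0, 0, 0) k"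
      proof (cases "k \<in> L - J")
        case True
        have c: "cmod (fst p $ k) = cmod (snd p $ k)" using True Lc by simp
        have "of_real (X1$k) * BB p k + of_real (AA p k) * Complex (X2$k) (X3$k) = 0"
          using ecomp_eq[OF c] ec[of k] unfolding AA_def BB_def by (simp add: mult.commute)
        then show ?thesis using True h' unfolding Lambda_def t_def L_def[symmetric] J_def[symmetric] projR_def
          by (simp add: mult.commute complex_eq_iff)
      next
        case False
        then show ?thesis using Lambda_out unfolding L_def J_def by metis
      qed
    qed
    then have "t = (0, 0, 0)" using I K tD zD unfolding inj_on_def by blast
    then have P: "projR (- J) X1 = 0" "projR (- J) X2 = 0" "projR (- J) X3 = 0" unfolding t_def by auto
    have pk: "k \<notin> J \<Longrightarrow> (projR (- J) Xi) $ k = Xi $ k" for k Xi unfolding projR_def by simp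
    have XJ: "k \<notin> J \<Longrightarrow> X1$k = 0 \<and> X2$k = 0 \<and> X3$k = 0" for k
      using pk[of k] P by (metis zero_index)
    have vz: "vf Xi p = 0" if "\<And>k. k \<notin> J \<Longrightarrow> Xi$k = 0" for Xi
      unfolding vf_def using that Jc by (auto simp: prod_eq_iff vec_eq_iff)
    have "X1 = 0" "X2 = 0" "X3 = 0"
      using locfree vz XJ Xn mz unfolding locally_free_def by blast+
    then show False using nz by simp
  qed
qed

end
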